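(* Let $m\ge2$, let $S\le H\le G$, and let $W$ be a cyclic $R_mH$-module which (with $S$ acting trivially) is a free $R_m(H/S)$-module. Then $W$ does not have property $\mathcal P(H)$.
   Context: $p$ is a prime, $G$ a cyclic group of order $p^n$, $R_m=\mathbb Z/p^m\mathbb Z$. Let $H\le G$ with generator $\tau$. For $m\ge2$, an $R_mH$-module $W$ has property $\mathcal P(H)$ if there exist an integer $s\ge0$ and elements $y,z\in W\setminus\big((\tau^{p^s}-1)W+pW\big)$ such that $(\tau^{p^s}-1)y=p^{m-1}z$. *)

theory Defs
  imports "HOL-Computational_Algebra.Primes"
begin

definition zmult :: "int \<Rightarrow> 'w::ab_group_add \<Rightarrow> 'w" where
  "zmult k x = (if 0 \<le> k then (((+) x) ^^ nat k) 0 else - ((((+) x) ^^ nat (- k)) 0))"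

text \<open>The group H is cyclic of order p^k with generator tau; an R_m H-module
  structure on the abelian group 'w is given by the action T of tau:
  an additive map with T^(p^k) = id, on a group killed by p^m.\<close>
definition RmH_module :: "nat \<Rightarrow> nat \<Rightarrow> nat \<Rightarrow> ('w::ab_group_add \<Rightarrow> 'w) \<Rightarrow> bool" where
  "RmH_module p m k T \<longleftrightarrow>
     (\<forall>x y. T (x + y) = T x + T y) \<and>
     (\<forall>x::'w. zmult (int p ^ m) x = 0) \<and>
     (T ^^ (p ^ k)) = id"

definition cyclic_RmH_module :: "nat \<Rightarrow> ('w::ab_group_add \<Rightarrow> 'w) \<Rightarrow> bool" where
  "cyclic_RmH_module hk T \<longleftrightarrow>
     (\<exists>w0. \<forall>w. \<exists>c :: nat \<Rightarrow> int. w = (\<Sum>i<hk. zmult (c i) ((T ^^ i) w0)))"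

text \<open>W is a free R_m[C_d]-module, where C_d (the quotient H/S, order d) acts via T:
  there is a basis B such that every element has a unique expression
  sum_{b in B, i<d} c(b,i) T^i b with coefficients c(b,i) in R_m = {0..<p^m},
  finitely many nonzero.\<close>
definition free_Rm_grmod :: "nat \<Rightarrow> nat \<Rightarrow> nat \<Rightarrow> ('w::ab_group_add \<Rightarrow> 'w) \<Rightarrow> bool" where
  "free_Rm_grmod p m d T \<longleftrightarrow>
     (\<exists>B :: 'w set. \<forall>w. \<exists>!c :: 'w \<times> nat \<Rightarrow> int.
        (\<forall>x. 0 \<le> c x \<and> c x < int p ^ m) \<and>
        (\<forall>b i. c (b, i) \<noteq> 0 \<longrightarrow> b \<in> B \<and> i < d) \<and>
        finite {x. c x \<noteq> 0} \<and>
        w = (\<Sum>x\<in>{x. c x \<noteq> 0}. zmult (c x) ((T ^^ snd x) (fst x))))"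

text \<open>Property P(H): exists s and y, z outside (tau^(p^s) - 1)W + pW with
  (tau^(p^s) - 1) y = p^(m-1) z.\<close>
definition sub_tau_p :: "nat \<Rightarrow> nat \<Rightarrow> ('w::ab_group_add \<Rightarrow> 'w) \<Rightarrow> 'w set" where
  "sub_tau_p p s T = {(T ^^ (p ^ s)) u - u + zmult (int p) v | u v. True}"

definition property_P :: "nat \<Rightarrow> nat \<Rightarrow> ('w::ab_group_add \<Rightarrow> 'w) \<Rightarrow> bool" where
  "property_P p m T \<longleftrightarrow>
     (\<exists>s::nat. \<exists>y z. y \<notin> sub_tau_p p s T \<and> z \<notin> sub_tau_p p s T \<and>
        (T ^^ (p ^ s)) y - y = zmult (int p ^ (m - 1)) z)"

end

theory Submission
  imports Defs
begin

lemma zmult_0[simp]: "zmult 0 x = 0" by (simp add: zmult_def)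

lemma zmult_succ: "zmult (k+1) x = zmult k x + x"
proof (cases "0 \<le> k")
  case True
  then have "nat (k+1) = Suc (nat k)" by simp
  then show ?thesis using True by (simp add: zmult_def add.commute)
next
  case False
  show ?thesis
  proof (cases "k = -1")
    case True then show ?thesis by (simp add: zmult_def)
  next
    case F2: False
    then have "nat (-k) = Suc (nat (-(k+1)))" using False by simp
    then show ?thesis using False F2 by (simp add: zmult_def algebra_simps)
  qed
qed

lemma zmult_pred: "zmult (k-1) x = zmult k x - x"
  using zmult_succ[of "k-1" x] by simp

lemma zmult_add_left: "zmult (a+b) x = zmult a x + zmult b x"
proof (induction b rule: int_induct[where k=0])
  case base then show ?case by simp
next
  case (step1 i) then show ?case using zmult_succ[of "a+i" x] zmult_succ[of i x] by (simp add: algebra_simps)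
next
  case (step2 i)
  have "zmult (a + (i - 1)) x = zmult ((a+i) - 1) x" by (simp add: algebra_simps)
  also have "\<dots> = zmult (a+i) x - x" by (rule zmult_pred)
  also have "\<dots> = zmult a x + (zmult i x - x)" using step2(2) by simp
  also have "zmult i x - x = zmult (i-1) x" by (rule zmult_pred[symmetric])
  finally show ?case .
qed

lemma zmult_1[simp]: "zmult 1 x = x" using zmult_succ[of 0 x] by simp

lemma zmult_zero_right[simp]: "zmult a (0::'w::ab_group_add) = 0"
proof (induction a rule: int_induct[where k=0])
  case base then show ?case by simp
next
  case (step1 i) then show ?case using zmult_succ[of i "0::'w"] by simp
next
  case (step2 i) then show ?case using zmult_pred[of i "0::'w"] by simp
qed

lemma zmult_add_right: "zmult a (x+y) = zmult a x + zmult a y"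
proof (induction a rule: int_induct[where k=0])
  case base then show ?case by simp
next
  case (step1 i) then show ?case using zmult_succ[of i "x+y"] zmult_succ[of i x] zmult_succ[of i y] by (simp add: algebra_simps)
next
  case (step2 i) show ?case unfolding zmult_pred step2(2) by (simp add: algebra_simps)
qed

lemma zmult_neg_right: "zmult a (-x) = - zmult a x"
  using zmult_add_right[of a x "-x"] by (simp add: eq_neg_iff_add_eq_0 add.commute)

lemma zmult_diff_right: "zmult a (x-y) = zmult a x - zmult a y"
  using zmult_add_right[of a x "-y"] zmult_neg_right[of a y] by simp

lemma zmult_neg_left: "zmult (-a) x = - zmult a x"
  using zmult_add_left[of a "-a" x] by (simp add: eq_neg_iff_add_eq_0 add.commute)

lemma zmult_diff_left: "zmult (a-b) x = zmult a x - zmult b x"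
  using zmult_add_left[of a "-b" x] zmult_neg_left[of b x] by simp

lemma zmult_mult: "zmult (a*b) x = zmult a (zmult b x)"
proof (induction a rule: int_induct[where k=0])
  case base then show ?case by simp
next
  case (step1 i)
  have e: "(i + 1) * b = i*b + b" by (simp add: algebra_simps)
  show ?case unfolding e zmult_add_left zmult_succ step1(2) by simp
next
  case (step2 i)
  have e: "(i - 1) * b = i*b - b" by (simp add: algebra_simps)
  show ?case unfolding e zmult_diff_left zmult_pred step2(2) by simp
qed

lemma hom_zero:
  fixes h :: "'a::ab_group_add \<Rightarrow> 'b::ab_group_add"
  assumes "\<And>x y. h (x+y) = h x + h y"
  shows "h 0 = 0"
proof -
  have "h 0 + h 0 = h 0 + 0" using assms[of 0 0] by simp
  then show "h 0 = 0" by (rule add_left_imp_eq)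
qed

lemma hom_diff:
  fixes h :: "'a::ab_group_add \<Rightarrow> 'b::ab_group_add"
  assumes "\<And>x y. h (x+y) = h x + h y"
  shows "h (x-y) = h x - h y"
proof -
  have "h (x - y) + h y = h x" using assms[of "x-y" y] by simp
  then show ?thesis by (simp add: eq_diff_eq)
qed

lemma zmult_hom:
  fixes h :: "'a::ab_group_add \<Rightarrow> 'b::ab_group_add"
  assumes "\<And>x y. h (x+y) = h x + h y"
  shows "h (zmult a x) = zmult a (h x)"
proof (induction a rule: int_induct[where k=0])
  case base then show ?case using hom_zero[OF assms] by simp
next
  case (step1 i) show ?case unfolding zmult_succ assms step1 ..
next
  case (step2 i) show ?case unfolding zmult_pred hom_diff[OF assms] step2 ..
qed

lemma zmult_sum_right: "zmult a (sum f A) = (\<Sum>x\<in>A. zmult a (f x))"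
  by (induction A rule: infinite_finite_induct) (simp_all add: zmult_add_right)

lemma zmult_sum_left: "zmult (sum f A) x = (\<Sum>i\<in>A. zmult (f i) x)"
  by (induction A rule: infinite_finite_induct) (simp_all add: zmult_add_left)

lemma zmult_mod:
  assumes "zmult M x = 0"
  shows "zmult (a mod M) x = zmult a x"
proof -
  have "zmult a x = zmult (a div M * M) x + zmult (a mod M) x"
    unfolding zmult_add_left[symmetric] by simp
  also have "zmult (a div M * M) x = 0" by (simp add: zmult_mult assms)
  finally show ?thesis by simp
qed

lemma hom_sum:
  fixes h :: "'a::ab_group_add \<Rightarrow> 'b::ab_group_add"
  assumes "\<And>x y. h (x+y) = h x + h y"
  shows "h (sum f A) = (\<Sum>x\<in>A. h (f x))"
proof -
  note h0 = hom_zero[of h, OF assms]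
  show ?thesis by (induction A rule: infinite_finite_induct) (simp_all add: h0 assms)
qed

lemma hom_pow:
  fixes h :: "'a::ab_group_add \<Rightarrow> 'a"
  assumes "\<And>x y. h (x+y) = h x + h y"
  shows "(h^^n) (x+y) = (h^^n) x + (h^^n) y"
proof (induction n)
  case 0 then show ?case by simp
next
  case (Suc n) then show ?case by (simp add: assms)
qed


locale frm =
  fixes T :: "'w::ab_group_add \<Rightarrow> 'w" and d :: nat
  assumes Tadd: "\<And>x y. T (x+y) = T x + T y" and Td: "T^^d = id" and dpos: "0 < d"
begin

definition L :: "'w set \<Rightarrow> ('w \<times> nat \<Rightarrow> int) \<Rightarrow> 'w" where
  "L B0 f = (\<Sum>b\<in>B0. \<Sum>i<d. zmult (f (b,i)) ((T^^i) b))"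

lemma Tpow_add: "(T^^n) (x+y) = (T^^n) x + (T^^n) y"
  by (rule hom_pow[OF Tadd])

lemma id_pow: "(id::'w\<Rightarrow>'w)^^q = id"
  by (induction q) auto

lemma Tpow_mod: "T^^n = T^^(n mod d)"
proof -
  have e: "n mod d + d * (n div d) = n" by (rule mod_mult_div_eq)
  have "T^^n = T^^(n mod d + d * (n div d))" by (simp only: e)
  also have "\<dots> = T^^(n mod d) \<circ> (T^^d)^^(n div d)" by (simp only: funpow_add funpow_mult)
  also have "\<dots> = T^^(n mod d)" by (simp add: Td id_pow)
  finally show ?thesis .
qed

lemma L_cong: "(\<And>b i. b\<in>B0 \<Longrightarrow> i<d \<Longrightarrow> f (b,i) = g (b,i)) \<Longrightarrow> L B0 f = L B0 g"
  unfolding L_def by (intro sum.cong) auto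

lemma L_add: "L B0 (\<lambda>x. f x + g x) = L B0 f + L B0 g"
  unfolding L_def by (simp add: zmult_add_left sum.distrib)

lemma L_diff: "L B0 (\<lambda>x. f x - g x) = L B0 f - L B0 g"
  unfolding L_def by (simp add: zmult_diff_left sum_subtractf)

lemma L_zero: "L B0 (\<lambda>x. 0) = 0"
  unfolding L_def by simp

lemma L_smult: "L B0 (\<lambda>x. a * f x) = zmult a (L B0 f)"
  unfolding L_def by (simp add: zmult_mult zmult_sum_right)

lemma L_sum: "L B0 (\<lambda>x. \<Sum>l\<in>A. F l x) = (\<Sum>l\<in>A. L B0 (F l))"
proof (induction A rule: infinite_finite_induct)
  case (infinite A) then show ?case by (simp add: L_zero)
next
  case empty then show ?case by (simp add: L_zero)
next
  case (insert l A) then show ?case by (simp add: L_add)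
qed

lemma mod_arith1: "x < d \<Longrightarrow> a \<le> d \<Longrightarrow> ((a + x) mod d + d - a) mod d = x"
proof -
  assume "x < d" "a \<le> d"
  then have "(a + x) mod d + d - a = (a + x) mod d + (d - a)" by simp
  then have "((a + x) mod d + d - a) mod d = ((a + x) mod d + (d - a)) mod d" by simp
  also
  have "((a + x) mod d + (d - a)) mod d = (a + x + (d - a)) mod d" by (simp add: mod_add_left_eq)
  also have "a + x + (d - a) = x + d" using \<open>a \<le> d\<close> by simp
  finally show ?thesis using \<open>x < d\<close> by simp
qed

lemma mod_arith2: "x < d \<Longrightarrow> a \<le> d \<Longrightarrow> (a + (x + d - a) mod d) mod d = x"
proof -
  assume "x < d" "a \<le> d"
  then have "x + d - a = x + (d - a)" by simp
  then have "(a + (x + d - a) mod d) mod d = (a + (x + (d - a)) mod d) mod d" by simp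
  also
  have "(a + (x + (d - a)) mod d) mod d = (a + (x + (d - a))) mod d" by (simp add: mod_add_right_eq)
  also have "a + (x + (d - a)) = x + d" using \<open>a \<le> d\<close> by simp
  finally show ?thesis using \<open>x < d\<close> by simp
qed

lemma L_Tpow:
  assumes "a \<le> d"
  shows "(T^^a) (L B0 f) = L B0 (\<lambda>(b,i). f (b, (i + (d - a)) mod d))"
proof -
  have hom: "\<And>x y. (T^^a) (x+y) = (T^^a) x + (T^^a) y" by (rule Tpow_add)
  have "(T^^a) (L B0 f) = (\<Sum>b\<in>B0. \<Sum>i<d. zmult (f (b,i)) ((T^^a) ((T^^i) b)))"
    unfolding L_def hom_sum[of "T^^a", OF hom] zmult_hom[of "T^^a", OF hom] ..
  also have "\<dots> = (\<Sum>b\<in>B0. \<Sum>i<d. zmult (f (b,i)) ((T^^((a+i) mod d)) b))"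
  proof -
    have key: "(T^^a) ((T^^i) b) = (T^^((a+i) mod d)) b" for i b
    proof -
      have "(T^^a) ((T^^i) b) = (T^^(a+i)) b" by (simp add: funpow_add)
      then show ?thesis using Tpow_mod[of "a+i"] by simp
    qed
    show ?thesis by (simp only: key)
  qed
  also have "\<dots> = L B0 (\<lambda>(b,i). f (b, (i + (d - a)) mod d))"
    unfolding L_def
  proof (rule sum.cong[OF refl])
    fix b
    show "(\<Sum>i<d. zmult (f (b,i)) ((T^^((a+i) mod d)) b)) =
          (\<Sum>i<d. zmult ((\<lambda>(b,i). f (b, (i + (d - a)) mod d)) (b,i)) ((T^^i) b))"
      apply (rule sum.reindex_bij_witness[where j="\<lambda>i. (a+i) mod d" and i="\<lambda>j. (j + (d - a)) mod d"])
      using assms dpos by (auto simp: mod_arith1 mod_arith2)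
  qed
  finally show ?thesis .
qed

end


lemma reindex_orbit:
  fixes c :: "nat \<Rightarrow> int"
  assumes "r < g" "0 < e" "d = g * e"
  shows "(\<Sum>l<e. c (r + g*l)) = (\<Sum>l<e. c ((r + (d - g*l)) mod d))"
proof -
  have inv: "(e - (e - l) mod e) mod e = l" if l: "l < e" for l
  proof (cases "l = 0")
    case True then show ?thesis by simp
  next
    case False then have "(e - l) mod e = e - l" using l by simp
    then show ?thesis using l by simp
  qed
  show ?thesis
proof (rule sum.reindex_bij_witness[where i="\<lambda>l. (e - l) mod e" and j="\<lambda>l. (e - l) mod e"])
  fix l assume l: "l \<in> {..<e}"
  show "c ((r + (d - g * ((e - l) mod e))) mod d) = c (r + g * l)"
  proof (cases "l = 0")
    case True
    have "(r + d) mod d = r" using assms by (simp add: less_le_trans)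
    then show ?thesis using True by simp
  next
    case False then have "(e - l) mod e = e - l" using l by simp
    moreover have "d - g * (e - l) = g * l" using assms l by (simp add: diff_mult_distrib2)
    moreover have "r + g * l < d"
    proof -
      have "r + g * l < g + g * l" using assms by simp
      also have "\<dots> = g * Suc l" by simp
      also have "\<dots> \<le> g * e" using l by (intro mult_le_mono2) simp
      finally show ?thesis using assms by simp
    qed
    ultimately show ?thesis by simp
  qed
qed (use inv assms in auto)
qed

lemma shift_claim:
  fixes c :: "nat \<Rightarrow> int"
  assumes g: "0 < g" and e: "0 < e" and d: "d = g * e" and i: "i < d"
  defines "uf \<equiv> \<lambda>i. - (\<Sum>a<Suc (i div g). c (i mod g + g*a))"
  shows "uf ((i + (d - g)) mod d) - uf i = c i - (if i < g then (\<Sum>l<e. c (i + g*l)) else 0)"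
proof (cases "i < g")
  case False
  then have ige: "g \<le> i" by simp
  have "(i + (d - g)) mod d = i - g"
  proof -
    have "g \<le> d" using d e by simp
    then have eqn: "i + (d - g) = (i - g) + d" using ige by simp
    show ?thesis unfolding eqn using i by simp
  qed
  moreover have "(i - g) div g = i div g - 1" using ige g by (simp add: le_div_geq)
  moreover have "(i - g) mod g = i mod g" using ige g by (simp add: le_mod_geq)
  moreover have "1 \<le> i div g" using ige g by (simp add: le_div_geq)
  moreover have "i mod g + g * (i div g) = i" by simp
  ultimately show ?thesis using False unfolding uf_def by simp
next
  case True
  have q: "(\<Sum>l<e. c (i + g*l)) = (\<Sum>a<Suc (e - 1). c (i mod g + g*a))"
    using True e by simp
  show ?thesis
  proof (cases "e = 1")
    case True
    then show ?thesis using \<open>i < g\<close> d unfolding uf_def by simp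
  next
    case False
    then have "(i + (d - g)) mod d = i + g * (e - 1)" using d e \<open>i < g\<close> i
      by (simp add: diff_mult_distrib2 algebra_simps)
    moreover have "(i + g * (e - 1)) div g = e - 1" using \<open>i < g\<close> g by simp
    moreover have "(i + g * (e - 1)) mod g = i" using \<open>i < g\<close> g by simp
    ultimately show ?thesis using \<open>i < g\<close> q unfolding uf_def by simp
  qed
qed


context frm begin

lemma L_zero_coeff:
  assumes free: "\<forall>w. \<exists>!c :: 'w \<times> nat \<Rightarrow> int.
        (\<forall>x. 0 \<le> c x \<and> c x < M) \<and>
        (\<forall>b i. c (b, i) \<noteq> 0 \<longrightarrow> b \<in> B \<and> i < d) \<and>
        finite {x. c x \<noteq> 0} \<and>
        w = (\<Sum>x\<in>{x. c x \<noteq> 0}. zmult (c x) ((T ^^ snd x) (fst x)))"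
   and M: "0 < M" and kill: "\<And>x::'w. zmult M x = 0" and B0: "finite B0" "B0 \<subseteq> B"
   and Lf: "L B0 f = 0" and b: "b \<in> B0" and i: "i < d"
  shows "f (b,i) mod M = 0"
proof -
  define h where "h x = (if fst x \<in> B0 \<and> snd x < d then f x mod M else 0)" for x
  have supp: "{x. h x \<noteq> 0} \<subseteq> B0 \<times> {..<d}" unfolding h_def by (auto split: if_splits)
  have fin: "finite (B0 \<times> {..<d})" using B0 by simp
  have "(\<Sum>x\<in>{x. h x \<noteq> 0}. zmult (h x) ((T ^^ snd x) (fst x)))
        = (\<Sum>x\<in>B0 \<times> {..<d}. zmult (h x) ((T ^^ snd x) (fst x)))"
    by (rule sum.mono_neutral_left[OF fin supp]) auto
  also have "\<dots> = (\<Sum>b\<in>B0. \<Sum>i<d. zmult (h (b,i)) ((T ^^ i) b))"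
    by (simp add: sum.cartesian_product case_prod_beta)
  also have "\<dots> = L B0 f"
    unfolding L_def by (intro sum.cong refl) (simp add: h_def zmult_mod kill)
  finally have hs: "(\<Sum>x\<in>{x. h x \<noteq> 0}. zmult (h x) ((T ^^ snd x) (fst x))) = 0"
    using Lf by simp
  have Ph: "(\<forall>x. 0 \<le> h x \<and> h x < M) \<and>
        (\<forall>b i. h (b, i) \<noteq> 0 \<longrightarrow> b \<in> B \<and> i < d) \<and>
        finite {x. h x \<noteq> 0} \<and>
        0 = (\<Sum>x\<in>{x. h x \<noteq> 0}. zmult (h x) ((T ^^ snd x) (fst x)))"
    using M B0 supp fin hs by (auto simp: h_def finite_subset split: if_splits)
  have P0: "(\<forall>x. 0 \<le> (\<lambda>x. 0::int) x \<and> (\<lambda>x. 0::int) x < M) \<and>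
        (\<forall>b i. (\<lambda>x. 0::int) (b, i) \<noteq> 0 \<longrightarrow> b \<in> B \<and> i < d) \<and>
        finite {x. (\<lambda>x. 0::int) x \<noteq> 0} \<and>
        (0::'w) = (\<Sum>x\<in>{x. (\<lambda>x. 0::int) x \<noteq> 0}. zmult ((\<lambda>x. 0::int) x) ((T ^^ snd x) (fst x)))"
    using M by simp
  define P where "P c w \<longleftrightarrow> (\<forall>x. 0 \<le> c x \<and> c x < M) \<and>
        (\<forall>b i. c (b, i) \<noteq> 0 \<longrightarrow> b \<in> B \<and> i < d) \<and>
        finite {x. c x \<noteq> 0} \<and>
        w = (\<Sum>x\<in>{x. c x \<noteq> 0}. zmult (c x) ((T ^^ snd x) (fst x)))" for c :: "'w \<times> nat \<Rightarrow> int" and w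
  have ex: "\<exists>!c. P c 0" using free unfolding P_def by blast
  have Ph': "P h 0" using Ph unfolding P_def by blast
  have P0': "P (\<lambda>x. 0) 0" using P0 unfolding P_def by blast
  from ex obtain c0 where hc0: "\<And>c. P c 0 \<Longrightarrow> c = c0" by blast
  have "h = (\<lambda>x. 0)" using hc0[OF Ph'] hc0[OF P0'] by simp
  then have "h (b,i) = 0" by simp
  then show ?thesis using b i by (simp add: h_def)
qed

end

theorem lemma4p2:
  fixes p n m k j :: nat and T :: "'w::ab_group_add \<Rightarrow> 'w"
  assumes "prime p"
    and "2 \<le> m"
    and "k \<le> n"
    and "j \<le> k"
    and "RmH_module p m k T"
    and "(T ^^ (p ^ (k - j))) = id"
    and "cyclic_RmH_module (p ^ k) T"
    and "free_Rm_grmod p m (p ^ (k - j)) T"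
  shows "\<not> property_P p m T"
proof
  assume PP: "property_P p m T"
  define q where "q = k - j"
  define d where "d = p ^ q"
  have p0: "0 < p" using assms(1) prime_gt_0_nat by blast
  have dpos: "0 < d" by (simp add: d_def p0)
  have Tadd: "\<And>x y. T (x+y) = T x + T y" using assms(5) unfolding RmH_module_def by blast
  have kill: "\<And>x::'w. zmult (int p ^ m) x = 0" using assms(5) unfolding RmH_module_def by blast
  have Td: "T^^d = id" using assms(6) d_def q_def by simp
  interpret F: frm T d using Tadd Td dpos by unfold_locales auto
  from assms(8) obtain B where free: "\<forall>w. \<exists>!c :: 'w \<times> nat \<Rightarrow> int.
        (\<forall>x. 0 \<le> c x \<and> c x < int p ^ m) \<and>
        (\<forall>b i. c (b, i) \<noteq> 0 \<longrightarrow> b \<in> B \<and> i < d) \<and>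
        finite {x. c x \<noteq> 0} \<and>
        w = (\<Sum>x\<in>{x. c x \<noteq> 0}. zmult (c x) ((T ^^ snd x) (fst x)))"
    unfolding free_Rm_grmod_def d_def q_def by blast
  from PP obtain s y z where znot: "z \<notin> sub_tau_p p s T"
    and eq: "(T ^^ (p ^ s)) y - y = zmult (int p ^ (m - 1)) z"
    unfolding property_P_def by blast
  define M where "M = int p ^ m"
  define K where "K = int p ^ (m - 1)"
  have Mpos: "0 < M" using p0 M_def by simp
  have MK: "M = int p * K" unfolding M_def K_def using assms(2)
    by (metis Suc_diff_1 less_le_trans numeral_2_eq_2 power_Suc zero_less_Suc)
  have Kne: "K \<noteq> 0" using p0 K_def by simp
  obtain c where c0: "\<forall>x. 0 \<le> c x \<and> c x < M" and csupp: "\<forall>b i. c (b,i) \<noteq> 0 \<longrightarrow> b\<in>B \<and> i<d"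
    and cfin: "finite {x. c x \<noteq> 0}"
    and zc: "z = (\<Sum>x\<in>{x. c x \<noteq> 0}. zmult (c x) ((T ^^ snd x) (fst x)))"
    using free[rule_format, of z] unfolding M_def by (auto dest: ex1_implies_ex)
  define B0 where "B0 = fst ` {x. c x \<noteq> 0}"
  have B0fin: "finite B0" using cfin B0_def by simp
  have B0B: "B0 \<subseteq> B" using csupp unfolding B0_def by force
  have supp: "{x. c x \<noteq> 0} \<subseteq> B0 \<times> {..<d}"
  proof
    fix x assume x: "x \<in> {x. c x \<noteq> 0}"
    then have "fst x \<in> B0" unfolding B0_def by blast
    moreover have "snd x < d" using csupp x by (cases x) auto
    ultimately show "x \<in> B0 \<times> {..<d}" by (cases x) auto
  qed
  have zL: "z = F.L B0 c"
  proof -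
    have fin: "finite (B0 \<times> {..<d})" using B0fin by simp
    have "z = (\<Sum>x\<in>B0 \<times> {..<d}. zmult (c x) ((T ^^ snd x) (fst x)))"
      unfolding zc by (rule sum.mono_neutral_left[OF fin supp]) auto
    also have "\<dots> = F.L B0 c" unfolding F.L_def by (simp add: sum.cartesian_product case_prod_beta)
    finally show ?thesis .
  qed
  define g where "g = (if s < q then p^s else d)"
  define e where "e = d div g"
  have gpos: "0 < g" using p0 dpos g_def by simp
  have gdvd: "g dvd d" unfolding g_def d_def by (auto intro: le_imp_power_dvd)
  have de: "d = g * e" using gdvd e_def by simp
  have epos: "0 < e" using de dpos by (cases e) auto
  have gled: "g \<le> d" using de epos by (cases e) auto
  have Tps: "T^^(p^s) = T^^g"
  proof (cases "s < q")
    case True then show ?thesis by (simp add: g_def)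
  next
    case False
    then have "d dvd p^s" unfolding d_def by (auto intro: le_imp_power_dvd)
    then have "T^^(p^s) = T^^0" using F.Tpow_mod[of "p^s"] by simp
    then show ?thesis using False Td g_def by simp
  qed
  have lhs0: "(\<Sum>l<e. (T^^(g*l)) ((T^^g) y - y)) = 0"
  proof -
    have "(T^^(g*l)) ((T^^g) y - y) = (T^^(g*Suc l)) y - (T^^(g*l)) y" for l
    proof -
      have "(T^^(g*l)) ((T^^g) y - y) = (T^^(g*l)) ((T^^g) y) - (T^^(g*l)) y"
        by (rule hom_diff[of "T^^(g*l)", OF F.Tpow_add])
      moreover have "(T^^(g*l)) ((T^^g) y) = (T^^(g*Suc l)) y"
      proof -
        have "(T^^(g*l + g)) y = (T^^(g*l)) ((T^^g) y)" by (simp only: funpow_add comp_apply)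
        moreover have "g * Suc l = g*l + g" by simp
        ultimately show ?thesis by (simp only:)
      qed
      ultimately show ?thesis by simp
    qed
    then have "(\<Sum>l<e. (T^^(g*l)) ((T^^g) y - y)) = (\<Sum>l<e. (T^^(g*Suc l)) y - (T^^(g*l)) y)"
      by simp
    also have "\<dots> = (T^^(g*e)) y - (T^^(g*0)) y"
      by (rule sum_lessThan_telescope[of "\<lambda>l. (T^^(g*l)) y"])
    also have "\<dots> = 0" using de Td by simp
    finally show ?thesis .
  qed
  have "(\<Sum>l<e. (T^^(g*l)) ((T^^g) y - y)) = zmult K (\<Sum>l<e. (T^^(g*l)) z)"
  proof -
    have "(T^^g) y - y = zmult K z" using eq Tps K_def by simp
    then show ?thesis
      by (simp add: zmult_hom[of "T^^(g*_)", OF F.Tpow_add] zmult_sum_right)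
  qed
  define Of where "Of = (\<lambda>x. \<Sum>l<e. (\<lambda>(b,i). c (b, (i + (d - g*l)) mod d)) x)"
  have NzL: "(\<Sum>l<e. (T^^(g*l)) z) = F.L B0 Of"
  proof -
    have "(\<Sum>l<e. (T^^(g*l)) z) = (\<Sum>l<e. F.L B0 (\<lambda>(b,i). c (b, (i + (d - g*l)) mod d)))"
    proof (rule sum.cong[OF refl])
      fix l assume "l \<in> {..<e}"
      then have "g * l \<le> d" using de by simp
      then show "(T^^(g*l)) z = F.L B0 (\<lambda>(b,i). c (b, (i + (d - g*l)) mod d))"
        unfolding zL by (rule F.L_Tpow)
    qed
    also have "\<dots> = F.L B0 Of" unfolding Of_def F.L_sum ..
    finally show ?thesis .
  qed
  have "F.L B0 (\<lambda>x. K * Of x) = 0"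
    using lhs0 \<open>(\<Sum>l<e. (T^^(g*l)) ((T^^g) y - y)) = zmult K (\<Sum>l<e. (T^^(g*l)) z)\<close> NzL
    by (simp add: F.L_smult)
  then have Odiv: "(K * Of (b,i)) mod M = 0" if "b \<in> B0" "i < d" for b i
    using F.L_zero_coeff[OF free[folded M_def] Mpos kill[folded M_def] B0fin B0B _ that] by blast
  have pO: "int p dvd Of (b,i)" if "b \<in> B0" "i < d" for b i
  proof -
    have "int p * K dvd K * Of (b,i)" using Odiv[OF that] MK by (simp add: mod_eq_0_iff_dvd)
    then show ?thesis using Kne by (simp add: mult.commute)
  qed
  define Q where "Q b r = (\<Sum>l<e. c (b, r + g*l))" for b r
  have pQ: "int p dvd Q b r" if "b \<in> B0" "r < g" for b r
  proof -
    have "Q b r = Of (b, r)" unfolding Q_def Of_def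
      using reindex_orbit[of r g e d "\<lambda>i. c (b,i)"] that epos de by simp
    then show ?thesis using pO[of b r] that gled by simp
  qed
  define uf where "uf = (\<lambda>(b,i). - (\<Sum>a<Suc (i div g). c (b, i mod g + g*a)))"
  define vf where "vf = (\<lambda>(b,i). if i < g then Q b i div int p else 0)"
  define U where "U = F.L B0 uf"
  have TU: "(T^^g) (F.L B0 uf) = F.L B0 (\<lambda>(b,i). uf (b, (i + (d - g)) mod d))"
    by (rule F.L_Tpow[OF gled])
  have "(T^^(p^s)) U - U + zmult (int p) (F.L B0 vf)
        = F.L B0 (\<lambda>x. ((\<lambda>(b,i). uf (b, (i + (d - g)) mod d)) x - uf x) + int p * vf x)"
    unfolding F.L_add F.L_diff F.L_smult Tps U_def TU ..
  also have "\<dots> = F.L B0 c"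
  proof (rule F.L_cong)
    fix b i assume b: "b \<in> B0" and i: "i < d"
    have sc: "uf (b, (i + (d - g)) mod d) - uf (b, i) = c (b, i) - (if i < g then Q b i else 0)"
      using shift_claim[of g e d i "\<lambda>i. c (b,i)", OF gpos epos de i] unfolding uf_def Q_def by simp
    have "int p * vf (b,i) = (if i < g then Q b i else 0)"
      using pQ[OF b] unfolding vf_def by auto
    then show "((\<lambda>(b,i). uf (b, (i + (d - g)) mod d)) (b,i) - uf (b,i)) + int p * vf (b,i) = c (b,i)"
      using sc by simp
  qed
  finally have "z = (T^^(p^s)) U - U + zmult (int p) (F.L B0 vf)" using zL by simp
  then have "z \<in> sub_tau_p p s T" unfolding sub_tau_p_def by blast
  with znot show False by simp
qed

end
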